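(* Consider a downlink THz-NOMA system in which a base station serves $K=2$ legacy primary users on two fixed (pre-configured) beams $\mathbf{f}_1,\mathbf{f}_2$, both primary users using the same transmit power $\rho^P>0$, and serves $M=1$ secondary user on these beams with total power budget $P^{\max}>0$. Let $h_k>0$ denote the secondary user's effective channel gain on beam $\mathbf{f}_k$, $k\in\{1,2\}$, and let $\rho_k\ge 0$ denote the secondary user's power on beam $\mathbf{f}_k$. Assume that the primary users' target data rates tend to $0$ (so that the primary users' quality-of-service and the secondary user's SIC-decodability constraints become inactive) and that the noise power $\sigma^2\to 0$ (high SNR). In this regime the joint beam and power allocation problem is $$\max_{\rho_1,\rho_2\ge 0,\ \rho_1+\rho_2\le P^{\max}} \; F(\rho_1,\rho_2)=\log_2\!\Big(1+\frac{h_1\rho_1}{h_2\rho_2+h_2\rho^P}\Big)+\log_2\!\Big(1+\frac{h_2\rho_2}{h_1\rho_1+h_1\rho^P}\Big),$$ and the greedy scheduling problem (use a single beam $\mathbf{f}_k$ with all other beams idle) is $\max_{k\in\{1,2\}}\max_{0\le \rho_k\le P^{\max}}\log_2\!\big(1+\frac{h_k\rho_k}{h_{k'}\rho^P}\big)$ with $k'\neq k$, whose solution is $\rho_{k^*}=P^{\max}$ on the beam $k^*=\arg\max_{k}h_k$ and $0$ on the other beam. Then the optimal solution of the joint problem is the same as that of the greedy scheduling problem: $\rho_{k^*}=P^{\max}$, $\rho_{k'}=0$ (with $k^*=\arg\max_k h_k$, $k'\ne k^*$) maximizes $F$ over the feasible set.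
   Context: Effective gains: $h_k=\frac{|a^S|^2}{\mathrm{PL}^S}|\mathbf{a}^H(\theta^S)\mathbf{f}_k|^2$, where $a^S$ is the secondary user's fading coefficient, $\mathrm{PL}^S$ its path loss, $\theta^S$ its angle of departure, and $\mathbf{a}(\theta)=[1,e^{-j2\pi f_c d\sin\theta/c},\dots,e^{-j2(N-1)\pi f_c d\sin\theta/c}]^T$ the array steering vector. The secondary user's signal on beam $k$ suffers interference from the primary signal and the secondary signal on the other beam $k'$ (inter-beam interference $h_{k'}(\rho^P+\rho_{k'})$); primary users treat secondary signals as noise and the secondary user decodes the primary signal on its beam first via successive interference cancellation. Logarithms are base 2. *)

theory Defs
  imports Complex_Main
begin

definition jointF :: "real \<Rightarrow> real \<Rightarrow> real \<Rightarrow> real \<Rightarrow> real \<Rightarrow> real" where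
  "jointF h1 h2 rhoP rho1 rho2 =
     log 2 (1 + h1 * rho1 / (h2 * rho2 + h2 * rhoP)) +
     log 2 (1 + h2 * rho2 / (h1 * rho1 + h1 * rhoP))"

definition feasible :: "real \<Rightarrow> real \<Rightarrow> real \<Rightarrow> bool" where
  "feasible Pmax rho1 rho2 \<longleftrightarrow> 0 \<le> rho1 \<and> 0 \<le> rho2 \<and> rho1 + rho2 \<le> Pmax"

definition greedy_sol :: "real \<Rightarrow> real \<Rightarrow> real \<Rightarrow> real \<times> real" where
  "greedy_sol h1 h2 Pmax = (if h1 \<ge> h2 then (Pmax, 0) else (0, Pmax))"

end

theory Submission
  imports Defs
begin

lemma key:
  fixes h1 h2 r P p1 p2 :: real
  assumes "h1 \<ge> h2" "h2 > 0" "r > 0" "0 \<le> p1" "0 \<le> p2" "p1 + p2 \<le> P"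
  shows "jointF h1 h2 r p1 p2 \<le> jointF h1 h2 r P 0"
proof -
  define x where "x = h1 * p1"
  define y where "y = h2 * p2"
  define a where "a = h1 * r"
  define b where "b = h2 * r"
  define T where "T = h1 * P"
  have h1: "h1 > 0" using assms by linarith
  have x0: "x \<ge> 0" "y \<ge> 0" using assms h1 by (simp_all add: x_def y_def)
  have ab: "a \<ge> b" "b > 0" using assms h1 by (simp_all add: a_def b_def mult_right_mono)
  have sT: "x + y \<le> T"
  proof -
    have "y \<le> h1 * p2" unfolding y_def using assms by (simp add: mult_right_mono)
    hence "x + y \<le> h1 * (p1 + p2)" unfolding x_def by (simp add: distrib_left)
    also have "\<dots> \<le> T" unfolding T_def using assms h1 by simp
    finally show ?thesis .
  qed
  have A: "1 + x / (y + b) = (x + y + b) / (y + b)" using x0 ab by (simp add: field_simps)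
  have B: "1 + y / (x + a) = (x + y + a) / (x + a)" using x0 ab by (simp add: field_simps)
  have C: "1 + T / b = (T + b) / b" using ab by (simp add: field_simps)
  have lhs: "jointF h1 h2 r p1 p2 = log 2 ((x + y + b) / (y + b) * ((x + y + a) / (x + a)))"
  proof -
    have e: "jointF h1 h2 r p1 p2 = log 2 (1 + x / (y + b)) + log 2 (1 + y / (x + a))"
      unfolding jointF_def x_def y_def a_def b_def ..
    have q1: "(x + y + b) / (y + b) > 0" "(x + y + a) / (x + a) > 0" using x0 ab by auto
    show ?thesis unfolding e A B using q1 by (simp only: log_mult_pos)
  qed
  have rhs: "jointF h1 h2 r P 0 = log 2 ((T + b) / b)"
    unfolding jointF_def using C by (simp add: T_def b_def)
  have poly1: "b * (x + y + a) \<le> (y + b) * (x + a)"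
  proof -
    have "b * y \<le> a * y" using ab x0 by (simp add: mult_right_mono)
    moreover have "0 \<le> x * y" using x0 by simp
    ultimately show ?thesis by (simp add: algebra_simps)
  qed
  have ineq: "(x + y + b) / (y + b) * ((x + y + a) / (x + a)) \<le> (T + b) / b"
  proof -
    have "(x + y + b) * (x + y + a) * b = (x + y + b) * (b * (x + y + a))" by (simp add: algebra_simps)
    also have "\<dots> \<le> (x + y + b) * ((y + b) * (x + a))" using poly1 x0 ab by (intro mult_left_mono) auto
    also have "\<dots> \<le> (T + b) * ((y + b) * (x + a))" using sT x0 ab by (intro mult_right_mono) auto
    finally have m: "(x + y + b) * (x + y + a) * b \<le> (T + b) * ((y + b) * (x + a))" .
    have p: "y + b > 0" "x + a > 0" "b > 0" using x0 ab by auto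
    have d: "(y + b) * (x + a) > 0" using p by simp
    have "(x + y + b) * (x + y + a) / ((y + b) * (x + a)) \<le> (T + b) / b"
      using m d p by (simp add: divide_le_eq pos_le_divide_eq mult.commute mult.left_commute)
    thus ?thesis by simp
  qed
  have pos: "0 < (x + y + b) / (y + b) * ((x + y + a) / (x + a))" using x0 ab by simp
  show ?thesis unfolding lhs rhs using ineq pos by simp
qed

lemma sym: "jointF h1 h2 r p1 p2 = jointF h2 h1 r p2 p1"
  unfolding jointF_def by simp

theorem lemma1:
  fixes h1 h2 rhoP Pmax :: real
  assumes "h1 > 0" and "h2 > 0" and "rhoP > 0" and "Pmax > 0"
  shows "feasible Pmax (fst (greedy_sol h1 h2 Pmax)) (snd (greedy_sol h1 h2 Pmax)) \<and>
         (\<forall>rho1 rho2. feasible Pmax rho1 rho2 \<longrightarrow>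
            jointF h1 h2 rhoP rho1 rho2 \<le>
            jointF h1 h2 rhoP (fst (greedy_sol h1 h2 Pmax)) (snd (greedy_sol h1 h2 Pmax)))"
proof (cases "h1 \<ge> h2")
  case True
  then show ?thesis using assms key[of h2 h1 rhoP] by (auto simp: greedy_sol_def feasible_def)
next
  case False
  then show ?thesis using assms key[of h1 h2 rhoP] sym
    by (auto simp: greedy_sol_def feasible_def add.commute)
qed

end
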